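(* Consider a stochastic block model graph with parameters $N_0,N_1\ge2$, $r,q\in(0,1)$ and label rate $\beta\in(0,1)$. Let $\sigma_1\ge0$ and $0\le\sigma_2<1$. Then with probability at least $$1-\sum_{j=0}^1N_j\left\{\exp\!\Big(-\frac{qN_{1-j}\sigma_1^2}{2(1+\frac13\sigma_1)}\Big)+3\exp\!\Big(-\frac18\beta rN_j\sigma_2^2\Big)\right\},$$ for every $j\in\{0,1\}$ and every $x_i\in\mathcal X_j$ we have $$\gamma_i\le\frac{(1+\sigma_1)qN_{1-j}}{(1+\sigma_1)qN_{1-j}+(1-\sigma_2)r(N_j-1)}\quad\text{and}\quad \beta_i\ge\frac{1-\sigma_2}{1+\sigma_2}\beta.$$
   Context: Stochastic block model (SBM): the vertex set $\mathcal X=\{x_1,\dots,x_n\}$ is partitioned as $\mathcal X=\mathcal X_0\cup\mathcal X_1$ with $|\mathcal X_0|=N_0$, $|\mathcal X_1|=N_1$, $n=N_0+N_1$ (the true label $g(x)=j$ for $x\in\mathcal X_j$). Edge weights are binary, $w_{xy}=w_{yx}\in\{0,1\}$, no self-loops, and for distinct pairs the edges are independent with $\mathbb P(w_{xy}=1)=r$ if $x,y$ lie in the same block and $\mathbb P(w_{xy}=1)=q$ if they lie in different blocks. Independently, each vertex is labeled (placed in $\Gamma$) with probability $\beta$, independently across vertices. For $x_i\in\mathcal X_j$: $$\gamma_i=\frac{\sum_{x\in\mathcal X_{1-j}}w_{x_ix}}{\sum_{x\in\mathcal X}w_{x_ix}},\qquad \beta_i=\frac{\sum_{x\in\mathcal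 X_j\cap\Gamma}w_{x_ix}}{\sum_{x\in\mathcal X_j}w_{x_ix}}.$$ *)

theory Defs
  imports "HOL-Probability.Probability"
begin

definition sbm_blk :: "nat \<Rightarrow> nat \<Rightarrow> nat" where
  "sbm_blk N0 i = (if i < N0 then 0 else 1)"

definition sbm_block :: "nat \<Rightarrow> nat \<Rightarrow> nat \<Rightarrow> nat set" where
  "sbm_block N0 N1 j = {i. i < N0 + N1 \<and> sbm_blk N0 i = j}"

definition sbm_size :: "nat \<Rightarrow> nat \<Rightarrow> nat \<Rightarrow> nat" where
  "sbm_size N0 N1 j = (if j = 0 then N0 else N1)"

text \<open>Unordered pairs of distinct vertices, represented as (i,j) with i < j.\<close>
definition sbm_pairs :: "nat \<Rightarrow> (nat \<times> nat) set" where
  "sbm_pairs n = {(i, j). i < j \<and> j < n}"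

definition sbm_edge_prob :: "nat \<Rightarrow> real \<Rightarrow> real \<Rightarrow> nat \<times> nat \<Rightarrow> real" where
  "sbm_edge_prob N0 r q e = (if sbm_blk N0 (fst e) = sbm_blk N0 (snd e) then r else q)"

text \<open>Independent edges and independent labels (membership in Gamma).\<close>
definition sbm_edges :: "nat \<Rightarrow> nat \<Rightarrow> real \<Rightarrow> real \<Rightarrow> (nat \<times> nat \<Rightarrow> bool) pmf" where
  "sbm_edges N0 N1 r q =
     Pi_pmf (sbm_pairs (N0 + N1)) False (\<lambda>e. bernoulli_pmf (sbm_edge_prob N0 r q e))"

definition sbm_labels :: "nat \<Rightarrow> nat \<Rightarrow> real \<Rightarrow> (nat \<Rightarrow> bool) pmf" where
  "sbm_labels N0 N1 \<beta> = Pi_pmf {..<N0 + N1} False (\<lambda>_. bernoulli_pmf \<beta>)"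

definition sbm_pmf :: "nat \<Rightarrow> nat \<Rightarrow> real \<Rightarrow> real \<Rightarrow> real \<Rightarrow> ((nat \<times> nat \<Rightarrow> bool) \<times> (nat \<Rightarrow> bool)) pmf" where
  "sbm_pmf N0 N1 r q \<beta> = pair_pmf (sbm_edges N0 N1 r q) (sbm_labels N0 N1 \<beta>)"

definition sbm_w :: "(nat \<times> nat \<Rightarrow> bool) \<Rightarrow> nat \<Rightarrow> nat \<Rightarrow> real" where
  "sbm_w E x y = (if x \<noteq> y \<and> E (min x y, max x y) then 1 else 0)"

definition sbm_gamma :: "nat \<Rightarrow> nat \<Rightarrow> (nat \<times> nat \<Rightarrow> bool) \<Rightarrow> nat \<Rightarrow> real" where
  "sbm_gamma N0 N1 E i =
     (\<Sum>x\<in>sbm_block N0 N1 (1 - sbm_blk N0 i). sbm_w E i x) / (\<Sum>x\<in>{..<N0 + N1}. sbm_w E i x)"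

definition sbm_beta :: "nat \<Rightarrow> nat \<Rightarrow> (nat \<times> nat \<Rightarrow> bool) \<Rightarrow> (nat \<Rightarrow> bool) \<Rightarrow> nat \<Rightarrow> real" where
  "sbm_beta N0 N1 E L i =
     (\<Sum>x\<in>{x\<in>sbm_block N0 N1 (sbm_blk N0 i). L x}. sbm_w E i x)
       / (\<Sum>x\<in>sbm_block N0 N1 (sbm_blk N0 i). sbm_w E i x)"

end

theory Submission
  imports Defs
begin


lemma fact_ge_pow3: "2 * 3^n \<le> (fact (n+2) :: real)"
proof (induction n)
  case 0 then show ?case by simp
next
  case (Suc n)
  have "fact (Suc n + 2) = real (n+3) * (fact (n+2) :: real)"
    by (simp add: algebra_simps)
  also have "\<dots> \<ge> 3 * fact (n+2)" by (intro mult_right_mono) auto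
  finally have "3 * fact (n+2) \<le> (fact (Suc n + 2)::real)" .
  moreover have "2 * 3 ^ Suc n = 3 * (2 * 3^n :: real)" by simp
  ultimately show ?case using Suc by linarith
qed

lemma exp_bernstein:
  fixes x :: real assumes x: "0 \<le> x" "x < 3"
  shows "exp x \<le> 1 + x + x^2 / (2*(1 - x/3))"
proof -
  define a where "a = (\<lambda>n. x^n / fact n)"
  have sa: "summable a" using summable_exp[of x] by (simp add: a_def field_simps)
  have e: "exp x = suminf a"
    using exp_converges[of x] by (simp add: a_def sums_iff field_simps)
  have sa2: "summable (\<lambda>n. a (Suc (Suc n)))"
    using sa summable_iff_shift[of a 2] by (simp add: numeral_2_eq_2)
  have "(\<Sum>n. a (Suc (Suc n))) = (\<Sum>n. a (Suc n)) - a 1"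
    using suminf_split_head[of "\<lambda>n. a (Suc n)"] sa summable_iff_shift[of a 1] by simp
  also have "\<dots> = suminf a - a 0 - a 1" using suminf_split_head[OF sa] by simp
  finally have split: "suminf a = 1 + x + (\<Sum>n. a (Suc (Suc n)))" by (simp add: a_def)
  have nc: "norm (x/3) < 1" using x by simp
  have sg: "summable (\<lambda>n. x^2/2 * (x/3)^n)"
    using summable_geometric[OF nc] by (rule summable_mult)
  have le: "a (Suc (Suc n)) \<le> x^2/2 * (x/3)^n" for n
  proof -
    have f: "2 * 3^n \<le> (fact (n+2) :: real)" by (rule fact_ge_pow3)
    have "a (Suc (Suc n)) = x^2 * x^n / fact (n+2)" by (simp add: a_def power_add power2_eq_square algebra_simps del: fact_Suc)
    also have "\<dots> \<le> x^2 * x^n / (2*3^n)"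
      by (intro divide_left_mono f) (use x in auto)
    also have "\<dots> = x^2/2 * (x/3)^n" by (simp add: power_divide)
    finally show ?thesis .
  qed
  have "(\<Sum>n. a (Suc (Suc n))) \<le> (\<Sum>n. x^2/2 * (x/3)^n)"
    by (rule suminf_le[OF le sa2 sg])
  also have "\<dots> = x^2/2 * (1/(1 - x/3))"
    by (subst suminf_mult[OF summable_geometric[OF nc]]) (simp add: suminf_geometric[OF nc])
  also have "\<dots> = x^2/(2*(1-x/3))" by simp
  finally show ?thesis using e split by simp
qed

lemma exp_neg_le: fixes x :: real assumes "0 \<le> x" shows "exp (-x) \<le> 1 - x + x^2/2"
proof -
  define g where "g = (\<lambda>t::real. 1 - t + t^2/2 - exp (-t))"
  have d: "(g has_real_derivative (-1 + t + exp (-t))) (at t)" for t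
    unfolding g_def by (auto intro!: derivative_eq_intros simp: power2_eq_square algebra_simps)
  have "g 0 \<le> g x"
  proof (rule DERIV_nonneg_imp_nondecreasing[OF assms])
    fix t assume "0 \<le> t" "t \<le> x"
    show "\<exists>y. (g has_real_derivative y) (at t) \<and> 0 \<le> y"
      using d[of t] exp_ge_add_one_self[of "-t"] by (intro exI[of _ "-1 + t + exp (-t)"]) auto
  qed
  then show ?thesis by (simp add: g_def)
qed



lemma markov_exp:
  fixes P :: "'w pmf" and S :: "'w \<Rightarrow> real"
  assumes l: "0 \<le> l"
    and c: "(\<integral>\<^sup>+w. ennreal (exp (l * S w)) \<partial>P) \<le> ennreal c" "0 \<le> c"
  shows "measure_pmf.prob P {w. t \<le> S w} \<le> exp (-l*t) * c"
proof -
  have "ennreal (measure_pmf.prob P {w. t \<le> S w}) = emeasure P {w. t \<le> S w}"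
    by (simp add: measure_pmf.emeasure_eq_measure)
  also have "\<dots> = (\<integral>\<^sup>+w. indicator {w. t \<le> S w} w \<partial>P)" by simp
  also have "\<dots> \<le> (\<integral>\<^sup>+w. ennreal (exp (-l*t)) * ennreal (exp (l * S w)) \<partial>P)"
  proof (intro nn_integral_mono)
    fix w
    show "indicator {w. t \<le> S w} w \<le> ennreal (exp (-l*t)) * ennreal (exp (l * S w))"
    proof (cases "t \<le> S w")
      case True
      have "l * t \<le> l * S w" using True l by (simp add: mult_left_mono)
      then have "1 \<le> exp (-l*t) * exp (l * S w)"
        by (simp flip: exp_add)
      then show ?thesis using True by (simp add: ennreal_mult[symmetric] flip: ennreal_1)
    qed auto
  qed
  also have "\<dots> = ennreal (exp (-l*t)) * (\<integral>\<^sup>+w. ennreal (exp (l * S w)) \<partial>P)"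
    by (rule nn_integral_cmult) simp
  also have "\<dots> \<le> ennreal (exp (-l*t)) * ennreal c"
    using c(1) by (rule mult_left_mono) simp
  also have "\<dots> = ennreal (exp (-l*t) * c)" using c by (simp add: ennreal_mult)
  finally show ?thesis
    using c by (simp add: ennreal_le_iff)
qed

lemma chernoff_upper:
  fixes P :: "'w pmf" and S :: "'w \<Rightarrow> real"
  assumes mgf: "\<And>l. 0 \<le> l \<Longrightarrow> (\<integral>\<^sup>+w. ennreal (exp (l * S w)) \<partial>P) \<le> ennreal (exp (\<mu> * (exp l - 1)))"
    and mu: "0 \<le> \<mu>" and s: "0 \<le> \<sigma>"
  shows "measure_pmf.prob P {w. (1+\<sigma>)*\<mu> \<le> S w} \<le> exp (- (\<mu> * \<sigma>^2) / (2 * (1 + \<sigma>/3)))"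
proof -
  define l where "l = \<sigma> / (1 + \<sigma>/3)"
  have l0: "0 \<le> l" using s by (simp add: l_def)
  have l3: "l < 3" using s by (simp add: l_def field_simps)
  have "measure_pmf.prob P {w. (1+\<sigma>)*\<mu> \<le> S w} \<le> exp (-l*((1+\<sigma>)*\<mu>)) * exp (\<mu> * (exp l - 1))"
    by (rule markov_exp[OF l0 mgf[OF l0]]) simp
  also have "\<dots> = exp (-l*((1+\<sigma>)*\<mu>) + \<mu> * (exp l - 1))" by (simp add: exp_add[symmetric])
  also have "\<dots> \<le> exp (-l*((1+\<sigma>)*\<mu>) + \<mu> * (l + l^2/(2*(1-l/3))))"
    using exp_bernstein[OF l0 l3] mu by (simp add: mult_left_mono)
  also have "-l*((1+\<sigma>)*\<mu>) + \<mu> * (l + l^2/(2*(1-l/3))) = - (\<mu> * \<sigma>^2) / (2 * (1 + \<sigma>/3))"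
  proof -
    have p: "3 + \<sigma> > 0" using s by simp
    have l': "l = 3*\<sigma>/(3+\<sigma>)" using p by (simp add: l_def field_simps)
    have a: "1 - l/3 = 3/(3+\<sigma>)" using p by (simp add: l' field_simps)
    have l2: "l^2 = 9*\<sigma>^2/(3+\<sigma>)^2" by (simp add: l' power_divide)
    have b: "l^2/(2*(1-l/3)) = 3*\<sigma>^2/(2*(3+\<sigma>))" unfolding a l2 using p
      by (simp add: divide_simps) (simp add: power2_eq_square)
    have c: "- (\<mu> * \<sigma>^2) / (2 * (1 + \<sigma>/3)) = - 3*\<mu>*\<sigma>^2/(2*(3+\<sigma>))"
      using p by (simp add: field_simps)
    have "-l*((1+\<sigma>)*\<mu>) + \<mu> * (l + l^2/(2*(1-l/3))) = -l*\<sigma>*\<mu> + \<mu>*(3*\<sigma>^2/(2*(3+\<sigma>)))"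
      unfolding b by (simp add: algebra_simps)
    also have "\<dots> = -3*\<sigma>^2*\<mu>/(3+\<sigma>) + 3*\<mu>*\<sigma>^2/(2*(3+\<sigma>))"
      by (simp add: l' power2_eq_square algebra_simps)
    also have "\<dots> = - 3*\<mu>*\<sigma>^2/(2*(3+\<sigma>))" 
      apply (simp add: divide_inverse inverse_mult_distrib algebra_simps)
      using p by (auto simp: field_simps)
    finally show ?thesis using c by simp
  qed
  finally show ?thesis .
qed

lemma chernoff_lower:
  fixes P :: "'w pmf" and S :: "'w \<Rightarrow> real"
  assumes mgf: "\<And>l. 0 \<le> l \<Longrightarrow> (\<integral>\<^sup>+w. ennreal (exp (- l * S w)) \<partial>P) \<le> ennreal (exp (\<mu> * (exp (-l) - 1)))"
    and mu: "0 \<le> \<mu>" and d: "0 \<le> \<delta>"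
  shows "measure_pmf.prob P {w. S w \<le> (1-\<delta>)*\<mu>} \<le> exp (- (\<mu> * \<delta>^2) / 2)"
proof -
  have m': "(\<integral>\<^sup>+w. ennreal (exp (\<delta> * (- S w))) \<partial>P) \<le> ennreal (exp (\<mu> * (exp (-\<delta>) - 1)))"
    using mgf[OF d] by simp
  have "measure_pmf.prob P {w. S w \<le> (1-\<delta>)*\<mu>} = measure_pmf.prob P {w. -((1-\<delta>)*\<mu>) \<le> - S w}"
    by simp
  also have "\<dots> \<le> exp (-\<delta>*(-((1-\<delta>)*\<mu>))) * exp (\<mu> * (exp (-\<delta>) - 1))"
    by (rule markov_exp[OF d m']) simp
  also have "\<dots> = exp (\<delta>*((1-\<delta>)*\<mu>) + \<mu> * (exp (-\<delta>) - 1))" by (simp add: exp_add[symmetric])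
  also have "\<dots> \<le> exp (\<delta>*((1-\<delta>)*\<mu>) + \<mu> * (-\<delta> + \<delta>^2/2))"
    using exp_neg_le[OF d] mu by (simp add: mult_left_mono)
  also have "\<delta>*((1-\<delta>)*\<mu>) + \<mu> * (-\<delta> + \<delta>^2/2) = - (\<mu> * \<delta>^2) / 2"
    by (simp add: field_simps power2_eq_square)
  finally show ?thesis .
qed



lemma nn_integral_bernoulli:
  assumes "0 \<le> a" "a \<le> 1"
  shows "(\<integral>\<^sup>+b. f b \<partial>measure_pmf (bernoulli_pmf a)) = f True * ennreal a + f False * ennreal (1-a)"
proof -
  have "(\<integral>\<^sup>+b. f b \<partial>measure_pmf (bernoulli_pmf a)) = (\<Sum>b\<in>UNIV. f b * ennreal (pmf (bernoulli_pmf a) b))"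
    by (rule nn_integral_measure_pmf_support) auto
  also have "\<dots> = f True * ennreal a + f False * ennreal (1-a)"
    using assms by (simp add: UNIV_bool)
  finally show ?thesis .
qed

lemma nn_prod_Pi:
  fixes \<phi> :: "'x \<Rightarrow> 'i" and p :: "'i \<Rightarrow> bool pmf" and h :: "'x \<Rightarrow> bool \<Rightarrow> ennreal"
  assumes I: "finite I" and X: "finite X" and inj: "inj_on \<phi> X" and sub: "\<phi> ` X \<subseteq> I"
  shows "(\<integral>\<^sup>+\<omega>. (\<Prod>x\<in>X. h x (\<omega> (\<phi> x))) \<partial>Pi_pmf I d p) = (\<Prod>x\<in>X. \<integral>\<^sup>+b. h x b \<partial>p (\<phi> x))"
proof -
  define g where "g = (\<lambda>e b. if e \<in> \<phi> ` X then h (the_inv_into X \<phi> e) b else 1)"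
  have g\<phi>: "g (\<phi> x) = h x" if "x \<in> X" for x
    using that inj by (simp add: g_def the_inv_into_f_f)
  have eq1: "(\<Prod>x\<in>X. h x (\<omega> (\<phi> x))) = (\<Prod>e\<in>I. g e (\<omega> e))" for \<omega>
  proof -
    have "(\<Prod>e\<in>\<phi>`X. g e (\<omega> e)) = (\<Prod>x\<in>X. g (\<phi> x) (\<omega> (\<phi> x)))"
      by (rule prod.reindex[OF inj, unfolded o_def])
    also have "\<dots> = (\<Prod>x\<in>X. h x (\<omega> (\<phi> x)))" by (intro prod.cong) (auto simp: g\<phi>)
    finally have a: "(\<Prod>e\<in>\<phi>`X. g e (\<omega> e)) = (\<Prod>x\<in>X. h x (\<omega> (\<phi> x)))" .
    have "(\<Prod>e\<in>\<phi>`X. g e (\<omega> e)) = (\<Prod>e\<in>I. g e (\<omega> e))"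
      by (rule prod.mono_neutral_left[OF I sub]) (auto simp: g_def)
    then show ?thesis using a by simp
  qed
  have "(\<integral>\<^sup>+\<omega>. (\<Prod>x\<in>X. h x (\<omega> (\<phi> x))) \<partial>Pi_pmf I d p) = (\<integral>\<^sup>+\<omega>. (\<Prod>e\<in>I. g e (\<omega> e)) \<partial>Pi_pmf I d p)"
    by (simp add: eq1)
  also have "\<dots> = (\<Prod>e\<in>I. \<integral>\<^sup>+b. g e b \<partial>p e)" by (rule nn_integral_prod_Pi_pmf[OF I])
  also have "\<dots> = (\<Prod>e\<in>\<phi>`X. \<integral>\<^sup>+b. g e b \<partial>p e)"
    by (rule prod.mono_neutral_right[OF I sub]) (auto simp: g_def measure_pmf.emeasure_space_1)
  also have "\<dots> = (\<Prod>x\<in>X. \<integral>\<^sup>+b. g (\<phi> x) b \<partial>p (\<phi> x))"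
    by (rule prod.reindex[OF inj, unfolded o_def])
  also have "\<dots> = (\<Prod>x\<in>X. \<integral>\<^sup>+b. h x b \<partial>p (\<phi> x))" by (intro prod.cong) (auto simp: g\<phi>)
  finally show ?thesis .
qed

lemma ind_sum_exp:
  fixes X :: "'x set" and B :: "'x \<Rightarrow> bool"
  assumes "finite X"
  shows "ennreal (exp (l * (\<Sum>x\<in>X. if B x then 1 else 0))) = (\<Prod>x\<in>X. ennreal (exp (l * (if B x then 1 else 0))))"
proof -
  have "exp (l * (\<Sum>x\<in>X. if B x then 1 else 0)) = (\<Prod>x\<in>X. exp (l * (if B x then 1 else 0)))"
    using assms by (simp add: sum_distrib_left exp_sum)
  then show ?thesis by (simp add: prod_ennreal)
qed

lemma bern_mgf:
  assumes "0 \<le> a" "a \<le> 1"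
  shows "(\<integral>\<^sup>+b. ennreal (exp (l * (if b then 1 else 0))) \<partial>measure_pmf (bernoulli_pmf a)) \<le> ennreal (exp (a * (exp l - 1)))"
proof -
  have "(\<integral>\<^sup>+b. ennreal (exp (l * (if b then 1 else 0))) \<partial>measure_pmf (bernoulli_pmf a))
      = ennreal (exp l * a + (1 - a))"
    using assms by (simp add: nn_integral_bernoulli ennreal_mult'[symmetric] ennreal_plus[symmetric] del: ennreal_plus)
  also have "\<dots> \<le> ennreal (exp (a * (exp l - 1)))"
    using exp_ge_add_one_self[of "a * (exp l - 1)"] by (intro ennreal_leI) (simp add: algebra_simps)
  finally show ?thesis .
qed

lemma prod_exp_pow:
  assumes "finite X"
  shows "(\<Prod>x\<in>X. ennreal (exp c)) = ennreal (exp (real (card X) * c))"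
proof -
  have "(\<Prod>x\<in>X. ennreal (exp c)) = ennreal (exp c) ^ card X" by simp
  also have "\<dots> = ennreal (exp c ^ card X)" by (simp add: ennreal_power)
  also have "exp c ^ card X = exp (real (card X) * c)" by (simp add: exp_of_nat_mult)
  finally show ?thesis .
qed



definition sbm_e :: "nat \<Rightarrow> nat \<Rightarrow> nat \<times> nat" where
  "sbm_e i x = (min i x, max i x)"

definition ind :: "bool \<Rightarrow> real" where "ind b = (if b then 1 else 0)"

lemma sbm_w_eq: "x \<noteq> i \<Longrightarrow> sbm_w E i x = ind (E (sbm_e i x))"
  by (simp add: sbm_w_def sbm_e_def ind_def)

lemma sbm_w_self: "sbm_w E i i = 0" by (simp add: sbm_w_def)

lemma finite_pairs: "finite (sbm_pairs n)"
proof -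
  have "sbm_pairs n \<subseteq> {..<n} \<times> {..<n}" by (auto simp: sbm_pairs_def)
  then show ?thesis by (rule finite_subset) auto
qed

lemma sbm_e_inj: "inj_on (sbm_e i) (S - {i})"
  by (rule inj_onI) (auto simp: sbm_e_def min_def max_def split: if_splits)

lemma sbm_e_inj': "i \<notin> S \<Longrightarrow> inj_on (sbm_e i) S"
  using sbm_e_inj[of i S] by simp

lemma sbm_e_pairs: "i < n \<Longrightarrow> x < n \<Longrightarrow> x \<noteq> i \<Longrightarrow> sbm_e i x \<in> sbm_pairs n"
  by (auto simp: sbm_e_def sbm_pairs_def min_def max_def)

lemma sbm_edge_prob_e: "sbm_edge_prob N0 r q (sbm_e i x) = (if sbm_blk N0 i = sbm_blk N0 x then r else q)"
  by (auto simp: sbm_edge_prob_def sbm_e_def min_def max_def)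

lemma edge_prod:
  assumes i: "i < N0+N1" and S: "S \<subseteq> {..<N0+N1} - {i}"
    and a: "\<And>x. x \<in> S \<Longrightarrow> sbm_edge_prob N0 r q (sbm_e i x) = a"
  shows "(\<integral>\<^sup>+E. (\<Prod>x\<in>S. h (E (sbm_e i x))) \<partial>sbm_edges N0 N1 r q) = (\<integral>\<^sup>+b. h b \<partial>bernoulli_pmf a) ^ card S"
proof -
  have fS: "finite S" using S by (rule finite_subset) auto
  have "(\<integral>\<^sup>+E. (\<Prod>x\<in>S. h (E (sbm_e i x))) \<partial>sbm_edges N0 N1 r q)
     = (\<Prod>x\<in>S. \<integral>\<^sup>+b. h b \<partial>bernoulli_pmf (sbm_edge_prob N0 r q (sbm_e i x)))"
    unfolding sbm_edges_def
    by (rule nn_prod_Pi[OF finite_pairs fS sbm_e_inj']) (use S i in \<open>auto intro!: sbm_e_pairs\<close>)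
  also have "\<dots> = (\<Prod>x\<in>S. \<integral>\<^sup>+b. h b \<partial>bernoulli_pmf a)" by (intro prod.cong) (auto simp: a)
  also have "\<dots> = (\<integral>\<^sup>+b. h b \<partial>bernoulli_pmf a) ^ card S" by simp
  finally show ?thesis .
qed

lemma nn_pair_fst: "(\<integral>\<^sup>+w. f (fst w) \<partial>pair_pmf A B) = (\<integral>\<^sup>+a. f a \<partial>A)"
  by (simp add: nn_integral_pair_pmf' measure_pmf.emeasure_space_1)


lemma edge_mgf:
  assumes i: "i < N0+N1" and S: "S \<subseteq> {..<N0+N1} - {i}"
    and a: "\<And>x. x \<in> S \<Longrightarrow> sbm_edge_prob N0 r q (sbm_e i x) = a" and a01: "0 \<le> a" "a \<le> 1"
  shows "(\<integral>\<^sup>+w. ennreal (exp (l * (\<Sum>x\<in>S. ind (fst w (sbm_e i x))))) \<partial>sbm_pmf N0 N1 r q \<beta>)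
        \<le> ennreal (exp ((real (card S) * a) * (exp l - 1)))"
proof -
  have fS: "finite S" using S by (rule finite_subset) auto
  have "(\<integral>\<^sup>+w. ennreal (exp (l * (\<Sum>x\<in>S. ind (fst w (sbm_e i x))))) \<partial>sbm_pmf N0 N1 r q \<beta>)
      = (\<integral>\<^sup>+E. (\<Prod>x\<in>S. ennreal (exp (l * (if E (sbm_e i x) then 1 else 0)))) \<partial>sbm_edges N0 N1 r q)"
    unfolding sbm_pmf_def ind_def
    using nn_pair_fst[where f = "\<lambda>E. ennreal (exp (l * (\<Sum>x\<in>S. if E (sbm_e i x) then 1 else 0)))"
       and A = "sbm_edges N0 N1 r q" and B = "sbm_labels N0 N1 \<beta>"]
    by (simp add: ind_sum_exp[OF fS])
  also have "\<dots> = (\<integral>\<^sup>+b. ennreal (exp (l * (if b then 1 else 0))) \<partial>bernoulli_pmf a) ^ card S"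
    by (rule edge_prod[OF i S a])
  also have "\<dots> \<le> ennreal (exp (a * (exp l - 1))) ^ card S"
    by (intro power_mono bern_mgf a01) simp
  also have "\<dots> = ennreal (exp ((real (card S) * a) * (exp l - 1)))"
    using prod_exp_pow[of "{..<card S}" "a * (exp l - 1)"] by (simp add: mult.assoc)
  finally show ?thesis .
qed

lemma label_mgf:
  assumes i: "i < N0+N1" and S: "S \<subseteq> {..<N0+N1} - {i}"
    and a: "\<And>x. x \<in> S \<Longrightarrow> sbm_edge_prob N0 r q (sbm_e i x) = a" and a01: "0 \<le> a" "a \<le> 1"
    and b01: "0 \<le> \<beta>" "\<beta> \<le> 1"
  shows "(\<integral>\<^sup>+w. ennreal (exp (l * (\<Sum>x\<in>S. ind (fst w (sbm_e i x) \<and> snd w x)))) \<partial>sbm_pmf N0 N1 r q \<beta>)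
        \<le> ennreal (exp ((real (card S) * (a * \<beta>)) * (exp l - 1)))"
proof -
  have fS: "finite S" using S by (rule finite_subset) auto
  define k where "k = (\<lambda>c. \<integral>\<^sup>+b. ennreal (exp (l * ind (c \<and> b))) \<partial>bernoulli_pmf \<beta>)"
  have inner: "(\<integral>\<^sup>+L. (\<Prod>x\<in>S. ennreal (exp (l * ind (E (sbm_e i x) \<and> L x)))) \<partial>sbm_labels N0 N1 \<beta>)
     = (\<Prod>x\<in>S. k (E (sbm_e i x)))" for E
    unfolding sbm_labels_def k_def
    using nn_prod_Pi[where I="{..<N0+N1}" and X=S and \<phi>="\<lambda>x. x" and h="\<lambda>x b. ennreal (exp (l * ind (E (sbm_e i x) \<and> b)))" and d=False and p="\<lambda>_. bernoulli_pmf \<beta>"] S fS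
    by auto
  have "(\<integral>\<^sup>+w. ennreal (exp (l * (\<Sum>x\<in>S. ind (fst w (sbm_e i x) \<and> snd w x)))) \<partial>sbm_pmf N0 N1 r q \<beta>)
      = (\<integral>\<^sup>+E. \<integral>\<^sup>+L. (\<Prod>x\<in>S. ennreal (exp (l * ind (E (sbm_e i x) \<and> L x)))) \<partial>sbm_labels N0 N1 \<beta> \<partial>sbm_edges N0 N1 r q)"
    unfolding sbm_pmf_def nn_integral_pair_pmf' ind_def by (simp add: ind_sum_exp[OF fS])
  also have "\<dots> = (\<integral>\<^sup>+E. (\<Prod>x\<in>S. k (E (sbm_e i x))) \<partial>sbm_edges N0 N1 r q)"
    by (simp add: inner)
  also have "\<dots> = (\<integral>\<^sup>+c. k c \<partial>bernoulli_pmf a) ^ card S"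
    by (rule edge_prod[OF i S a])
  also have "\<dots> \<le> ennreal (exp ((a * \<beta>) * (exp l - 1))) ^ card S"
  proof (intro power_mono)
    have kT: "k True = ennreal (exp l * \<beta> + (1 - \<beta>))"
      unfolding k_def using b01
      by (simp add: nn_integral_bernoulli ind_def ennreal_mult'[symmetric] ennreal_plus[symmetric] del: ennreal_plus)
    have kF: "k False = 1"
      unfolding k_def by (simp add: ind_def measure_pmf.emeasure_space_1)
    have "(\<integral>\<^sup>+c. k c \<partial>bernoulli_pmf a) = ennreal ((exp l * \<beta> + (1 - \<beta>)) * a + (1 - a))"
      using a01 b01 by (simp add: nn_integral_bernoulli kT kF ennreal_mult'[symmetric] ennreal_plus[symmetric] del: ennreal_plus)
    also have "\<dots> \<le> ennreal (exp ((a * \<beta>) * (exp l - 1)))"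
      using exp_ge_add_one_self[of "(a * \<beta>) * (exp l - 1)"] by (intro ennreal_leI) (simp add: algebra_simps)
    finally show "(\<integral>\<^sup>+c. k c \<partial>bernoulli_pmf a) \<le> ennreal (exp ((a * \<beta>) * (exp l - 1)))" .
  qed simp
  also have "\<dots> = ennreal (exp ((real (card S) * (a * \<beta>)) * (exp l - 1)))"
    using prod_exp_pow[of "{..<card S}" "(a * \<beta>) * (exp l - 1)"] by (simp add: mult.assoc)
  finally show ?thesis .
qed



lemma block0: "sbm_block N0 N1 0 = {..<N0}"
  by (auto simp: sbm_block_def sbm_blk_def)
lemma block1: "sbm_block N0 N1 1 = {N0..<N0+N1}"
  by (auto simp: sbm_block_def sbm_blk_def)

lemma card_block: "j \<in> {0,1} \<Longrightarrow> card (sbm_block N0 N1 j) = sbm_size N0 N1 j"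
  using block1[of N0 N1] by (auto simp: block0 sbm_size_def)

lemma finite_block: "finite (sbm_block N0 N1 j)"
  by (rule finite_subset[of _ "{..<N0+N1}"]) (auto simp: sbm_block_def)

lemma blk01: "sbm_blk N0 i \<in> {0,1}" by (simp add: sbm_blk_def)

lemma in_block: "i \<in> sbm_block N0 N1 j \<longleftrightarrow> i < N0+N1 \<and> sbm_blk N0 i = j"
  by (simp add: sbm_block_def)

lemma all_blocks: "j \<in> {0,1} \<Longrightarrow> {..<N0+N1} = sbm_block N0 N1 j \<union> sbm_block N0 N1 (1-j)"
  by (auto simp: sbm_block_def sbm_blk_def)

lemma disj_blocks: "j \<in> {0,1} \<Longrightarrow> sbm_block N0 N1 j \<inter> sbm_block N0 N1 (1-j) = {}"
  by (auto simp: sbm_block_def)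

lemma gamma_bound:
  fixes x y A B :: real
  assumes "0 \<le> x" "x \<le> A" "B \<le> y" "0 \<le> B"
  shows "x/(x+y) \<le> A/(A+B)"
proof (cases "x = 0")
  case True then show ?thesis using assms by simp
next
  case False
  then have x: "0 < x" using assms by simp
  have "x/(x+y) \<le> A/(A+y)"
    using assms x by (simp add: divide_simps) (simp add: algebra_simps mult_right_mono)
  also have "\<dots> \<le> A/(A+B)"
    using assms x by (intro divide_left_mono) (auto intro: add_pos_nonneg mult_pos_pos)
  finally show ?thesis .
qed

lemma beta_bound:
  fixes m d m0 d0 :: real
  assumes "0 < m0" "m0 \<le> m" "m \<le> d" "d \<le> d0"
  shows "m0/d0 \<le> m/d"
proof -
  have "m0/d0 \<le> m/d0" using assms by (intro divide_right_mono) auto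
  also have "\<dots> \<le> m/d" using assms by (intro divide_left_mono) auto
  finally show ?thesis .
qed

lemma helper_ineq:
  fixes bb rr ss zz :: real
  assumes "2 \<le> ss" "0 \<le> bb" "bb \<le> 1" "0 \<le> rr" "0 \<le> zz"
  shows "bb*rr * ss*zz/8 \<le> (ss-1)*rr*zz/4" "bb*rr * ss*zz/8 \<le> (ss-1)*(rr*bb)*zz/2"
proof -
  have rz: "0 \<le> rr*zz" using assms by simp
  have a: "bb*(rr*zz) * ss \<le> 1*(rr*zz) * ss" using assms rz by (intro mult_right_mono) auto
  have b: "ss*(rr*zz) \<le> 2*(ss-1)*(rr*zz)" using assms rz by (intro mult_right_mono) auto
  show "bb*rr * ss*zz/8 \<le> (ss-1)*rr*zz/4" using a b by (simp add: algebra_simps)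
  have rz': "0 \<le> bb*rr*zz" using assms by simp
  have c: "ss*(bb*rr*zz) \<le> 4*(ss-1)*(bb*rr*zz)" using assms rz' by (intro mult_right_mono) auto
  show "bb*rr * ss*zz/8 \<le> (ss-1)*(rr*bb)*zz/2" using c by (simp add: algebra_simps)
qed



definition "Bout N0 N1 i = sbm_block N0 N1 (1 - sbm_blk N0 i)"
definition "Bin N0 N1 i = sbm_block N0 N1 (sbm_blk N0 i) - {i}"
definition "Dout N0 N1 i w = (\<Sum>x\<in>Bout N0 N1 i. ind (fst w (sbm_e i x)))"
definition "Din N0 N1 i w = (\<Sum>x\<in>Bin N0 N1 i. ind (fst w (sbm_e i x)))"
definition "Mc N0 N1 i w = (\<Sum>x\<in>Bin N0 N1 i. ind (fst w (sbm_e i x) \<and> snd w x))"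

lemma Bout_sub: "i < N0+N1 \<Longrightarrow> Bout N0 N1 i \<subseteq> {..<N0+N1} - {i}"
  by (auto simp: Bout_def sbm_block_def sbm_blk_def)
lemma Bin_sub: "i < N0+N1 \<Longrightarrow> Bin N0 N1 i \<subseteq> {..<N0+N1} - {i}"
  by (auto simp: Bin_def sbm_block_def)
lemma prob_out: "x \<in> Bout N0 N1 i \<Longrightarrow> sbm_edge_prob N0 r q (sbm_e i x) = q"
  by (auto simp: Bout_def sbm_block_def sbm_blk_def sbm_edge_prob_e)
lemma prob_in: "x \<in> Bin N0 N1 i \<Longrightarrow> sbm_edge_prob N0 r q (sbm_e i x) = r"
  by (auto simp: Bin_def sbm_block_def sbm_blk_def sbm_edge_prob_e)
lemma card_Bout: "card (Bout N0 N1 i) = sbm_size N0 N1 (1 - sbm_blk N0 i)"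
  unfolding Bout_def by (rule card_block) (auto simp: sbm_blk_def)
lemma card_Bin: "i < N0+N1 \<Longrightarrow> card (Bin N0 N1 i) = sbm_size N0 N1 (sbm_blk N0 i) - 1"
  unfolding Bin_def using card_block[OF blk01[of N0 i], of N0 N1] finite_block[of N0 N1 "sbm_blk N0 i"]
  by (simp add: in_block)

lemma size_ge2: "N0 \<ge> 2 \<Longrightarrow> N1 \<ge> 2 \<Longrightarrow> sbm_size N0 N1 j \<ge> 2"
  by (simp add: sbm_size_def)

lemma real_card_Bin: "i < N0+N1 \<Longrightarrow> N0 \<ge> 2 \<Longrightarrow> N1 \<ge> 2 \<Longrightarrow>
   real (card (Bin N0 N1 i)) = real (sbm_size N0 N1 (sbm_blk N0 i)) - 1"
  using card_Bin[of i N0 N1] size_ge2[of N0 N1 "sbm_blk N0 i"] by (simp add: of_nat_diff)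

lemma Mc_le_Din: "Mc N0 N1 i w \<le> Din N0 N1 i w"
  unfolding Mc_def Din_def by (intro sum_mono) (auto simp: ind_def)

lemma Dout_nonneg: "0 \<le> Dout N0 N1 i w"
  unfolding Dout_def by (intro sum_nonneg) (auto simp: ind_def)

lemma gamma_eq:
  assumes i: "i < N0+N1"
  shows "sbm_gamma N0 N1 E i = Dout N0 N1 i (E,L) / (Dout N0 N1 i (E,L) + Din N0 N1 i (E,L))"
proof -
  let ?j = "sbm_blk N0 i"
  have j: "?j \<in> {0,1}" by (rule blk01)
  have iin: "i \<in> sbm_block N0 N1 ?j" using i by (simp add: in_block)
  have o: "(\<Sum>x\<in>sbm_block N0 N1 (1 - ?j). sbm_w E i x) = Dout N0 N1 i (E,L)"
    unfolding Dout_def Bout_def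
  proof (rule sum.cong[OF refl])
    fix x assume "x \<in> sbm_block N0 N1 (1 - ?j)"
    then have "x \<noteq> i" by (auto simp: sbm_block_def sbm_blk_def split: if_splits)
    then show "sbm_w E i x = ind (fst (E,L) (sbm_e i x))" by (simp add: sbm_w_eq)
  qed
  have "(\<Sum>x\<in>sbm_block N0 N1 ?j. sbm_w E i x) = sbm_w E i i + (\<Sum>x\<in>Bin N0 N1 i. sbm_w E i x)"
    unfolding Bin_def using iin finite_block by (simp add: sum.remove)
  also have "\<dots> = Din N0 N1 i (E,L)"
    unfolding Din_def by (simp add: sbm_w_self Bin_def sbm_w_eq)
  finally have n: "(\<Sum>x\<in>sbm_block N0 N1 ?j. sbm_w E i x) = Din N0 N1 i (E,L)" .
  have "(\<Sum>x\<in>{..<N0 + N1}. sbm_w E i x) = (\<Sum>x\<in>sbm_block N0 N1 ?j. sbm_w E i x) + (\<Sum>x\<in>sbm_block N0 N1 (1 - ?j). sbm_w E i x)"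
    unfolding all_blocks[OF j, of N0 N1] by (rule sum.union_disjoint) (use finite_block disj_blocks[OF j] in auto)
  then show ?thesis unfolding sbm_gamma_def using o n by simp
qed

lemma beta_eq:
  assumes i: "i < N0+N1"
  shows "sbm_beta N0 N1 E L i = Mc N0 N1 i (E,L) / Din N0 N1 i (E,L)"
proof -
  let ?j = "sbm_blk N0 i"
  have iin: "i \<in> sbm_block N0 N1 ?j" using i by (simp add: in_block)
  have "(\<Sum>x\<in>sbm_block N0 N1 ?j. sbm_w E i x) = sbm_w E i i + (\<Sum>x\<in>Bin N0 N1 i. sbm_w E i x)"
    unfolding Bin_def using iin finite_block by (simp add: sum.remove)
  also have "\<dots> = Din N0 N1 i (E,L)"
    unfolding Din_def by (simp add: sbm_w_self Bin_def sbm_w_eq)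
  finally have n: "(\<Sum>x\<in>sbm_block N0 N1 ?j. sbm_w E i x) = Din N0 N1 i (E,L)" .
  have "(\<Sum>x\<in>{x\<in>sbm_block N0 N1 ?j. L x}. sbm_w E i x) = (\<Sum>x\<in>sbm_block N0 N1 ?j. if L x then sbm_w E i x else 0)"
    using finite_block by (simp add: sum.inter_filter)
  also have "\<dots> = (if L i then sbm_w E i i else 0) + (\<Sum>x\<in>Bin N0 N1 i. if L x then sbm_w E i x else 0)"
    unfolding Bin_def using iin finite_block by (simp add: sum.remove)
  also have "\<dots> = Mc N0 N1 i (E,L)"
  proof -
    have "\<And>x. x \<in> Bin N0 N1 i \<Longrightarrow> (if L x then sbm_w E i x else 0) = ind (E (sbm_e i x) \<and> L x)"
      by (auto simp: Bin_def sbm_w_eq ind_def)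
    then have "(\<Sum>x\<in>Bin N0 N1 i. if L x then sbm_w E i x else 0) = (\<Sum>x\<in>Bin N0 N1 i. ind (E (sbm_e i x) \<and> L x))"
      by (rule sum.cong[OF refl])
    then show ?thesis by (simp add: Mc_def sbm_w_self)
  qed
  finally show ?thesis unfolding sbm_beta_def using n by simp
qed



definition "B1 N0 N1 q \<sigma>1 i = {w. (1+\<sigma>1)*(real (card (Bout N0 N1 i))*q) \<le> Dout N0 N1 i w}"
definition "B2 N0 N1 r \<sigma>2 i = {w. Din N0 N1 i w \<le> (1-\<sigma>2)*(real (card (Bin N0 N1 i))*r)}"
definition "B3 N0 N1 r \<sigma>2 i = {w. (1+\<sigma>2)*(real (card (Bin N0 N1 i))*r) \<le> Din N0 N1 i w}"
definition "B4 N0 N1 r \<beta> \<sigma>2 i = {w. Mc N0 N1 i w \<le> (1-\<sigma>2)*(real (card (Bin N0 N1 i))*(r*\<beta>))}"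

lemma P1:
  assumes i: "i < N0+N1" and q: "0 \<le> q" "q \<le> 1" and s: "0 \<le> \<sigma>1"
  shows "measure_pmf.prob (sbm_pmf N0 N1 r q \<beta>) (B1 N0 N1 q \<sigma>1 i)
     \<le> exp (- ((real (card (Bout N0 N1 i))*q) * \<sigma>1^2) / (2 * (1 + \<sigma>1/3)))"
  unfolding B1_def
proof (rule chernoff_upper[OF _ _ s])
  fix l :: real assume "0 \<le> l"
  show "(\<integral>\<^sup>+w. ennreal (exp (l * Dout N0 N1 i w)) \<partial>sbm_pmf N0 N1 r q \<beta>)
    \<le> ennreal (exp ((real (card (Bout N0 N1 i))*q) * (exp l - 1)))"
    unfolding Dout_def by (rule edge_mgf[OF i Bout_sub[OF i] prob_out q])
qed (use q in simp)

lemma P2: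
  assumes i: "i < N0+N1" and r: "0 \<le> r" "r \<le> 1" and s: "0 \<le> \<sigma>2"
  shows "measure_pmf.prob (sbm_pmf N0 N1 r q \<beta>) (B2 N0 N1 r \<sigma>2 i)
     \<le> exp (- ((real (card (Bin N0 N1 i))*r) * \<sigma>2^2) / 2)"
  unfolding B2_def
proof (rule chernoff_lower[OF _ _ s])
  fix l :: real assume "0 \<le> l"
  show "(\<integral>\<^sup>+w. ennreal (exp (- l * Din N0 N1 i w)) \<partial>sbm_pmf N0 N1 r q \<beta>)
    \<le> ennreal (exp ((real (card (Bin N0 N1 i))*r) * (exp (-l) - 1)))"
    unfolding Din_def by (rule edge_mgf[OF i Bin_sub[OF i] prob_in r])
qed (use r in simp)

lemma P3:
  assumes i: "i < N0+N1" and r: "0 \<le> r" "r \<le> 1" and s: "0 \<le> \<sigma>2"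
  shows "measure_pmf.prob (sbm_pmf N0 N1 r q \<beta>) (B3 N0 N1 r \<sigma>2 i)
     \<le> exp (- ((real (card (Bin N0 N1 i))*r) * \<sigma>2^2) / (2 * (1 + \<sigma>2/3)))"
  unfolding B3_def
proof (rule chernoff_upper[OF _ _ s])
  fix l :: real assume "0 \<le> l"
  show "(\<integral>\<^sup>+w. ennreal (exp (l * Din N0 N1 i w)) \<partial>sbm_pmf N0 N1 r q \<beta>)
    \<le> ennreal (exp ((real (card (Bin N0 N1 i))*r) * (exp l - 1)))"
    unfolding Din_def by (rule edge_mgf[OF i Bin_sub[OF i] prob_in r])
qed (use r in simp)

lemma P4:
  assumes i: "i < N0+N1" and r: "0 \<le> r" "r \<le> 1" and b: "0 \<le> \<beta>" "\<beta> \<le> 1" and s: "0 \<le> \<sigma>2"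
  shows "measure_pmf.prob (sbm_pmf N0 N1 r q \<beta>) (B4 N0 N1 r \<beta> \<sigma>2 i)
     \<le> exp (- ((real (card (Bin N0 N1 i))*(r*\<beta>)) * \<sigma>2^2) / 2)"
  unfolding B4_def
proof (rule chernoff_lower[OF _ _ s])
  fix l :: real assume "0 \<le> l"
  show "(\<integral>\<^sup>+w. ennreal (exp (- l * Mc N0 N1 i w)) \<partial>sbm_pmf N0 N1 r q \<beta>)
    \<le> ennreal (exp ((real (card (Bin N0 N1 i))*(r*\<beta>)) * (exp (-l) - 1)))"
    unfolding Mc_def by (rule label_mgf[OF i Bin_sub[OF i] prob_in r b])
qed (use r b in simp)



definition "Fj N0 N1 r q \<beta> \<sigma>1 \<sigma>2 j =
  (exp (- (q * real (sbm_size N0 N1 (1 - j)) * \<sigma>1\<^sup>2) / (2 * (1 + \<sigma>1 / 3)))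
         + 3 * exp (- (1/8) * \<beta> * r * real (sbm_size N0 N1 j) * \<sigma>2\<^sup>2))"

definition "Bad N0 N1 r q \<beta> \<sigma>1 \<sigma>2 i = B1 N0 N1 q \<sigma>1 i \<union> B2 N0 N1 r \<sigma>2 i \<union> B3 N0 N1 r \<sigma>2 i \<union> B4 N0 N1 r \<beta> \<sigma>2 i"

lemma vertex_bound:
  assumes i: "i < N0+N1" and N: "N0 \<ge> 2" "N1 \<ge> 2"
    and "0 < r" "r < 1" "0 < q" "q < 1" "0 < \<beta>" "\<beta> < 1"
    and "\<sigma>1 \<ge> 0" "0 \<le> \<sigma>2" "\<sigma>2 < 1"
  shows "measure_pmf.prob (sbm_pmf N0 N1 r q \<beta>) (Bad N0 N1 r q \<beta> \<sigma>1 \<sigma>2 i) \<le> Fj N0 N1 r q \<beta> \<sigma>1 \<sigma>2 (sbm_blk N0 i)"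
proof -
  let ?P = "measure_pmf.prob (sbm_pmf N0 N1 r q \<beta>)"
  let ?j = "sbm_blk N0 i"
  define s where "s = real (sbm_size N0 N1 ?j)"
  define T where "T = exp (- (1/8) * \<beta> * r * s * \<sigma>2\<^sup>2)"
  have s2: "2 \<le> s" using size_ge2[OF N] by (simp add: s_def)
  have cB: "real (card (Bin N0 N1 i)) = s - 1" using real_card_Bin[OF i N] by (simp add: s_def)
  have cO: "real (card (Bout N0 N1 i)) = real (sbm_size N0 N1 (1 - ?j))" by (simp add: card_Bout)
  have z: "0 \<le> \<sigma>2\<^sup>2" by simp
  have H1: "\<beta>*r * s * \<sigma>2\<^sup>2/8 \<le> (s-1)*r*\<sigma>2\<^sup>2/4" and H2: "\<beta>*r * s * \<sigma>2\<^sup>2/8 \<le> (s-1)*(r*\<beta>)*\<sigma>2\<^sup>2/2"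
    using helper_ineq[OF s2 _ _ _ z, of \<beta> r] assms by auto
  have e1: "?P (B1 N0 N1 q \<sigma>1 i) \<le> exp (- (q * real (sbm_size N0 N1 (1 - ?j)) * \<sigma>1\<^sup>2) / (2 * (1 + \<sigma>1 / 3)))"
    using P1[OF i, of q \<sigma>1 r \<beta>] assms by (simp add: cO mult.commute)
  have e2: "?P (B2 N0 N1 r \<sigma>2 i) \<le> T"
  proof -
    have "?P (B2 N0 N1 r \<sigma>2 i) \<le> exp (- ((s-1)*r) * \<sigma>2^2 / 2)"
      using P2[OF i, of r \<sigma>2 q \<beta>] assms by (simp add: cB)
    also have "\<dots> \<le> T" unfolding T_def
    proof (subst exp_le_cancel_iff)
      have "0 \<le> (s-1)*r*\<sigma>2\<^sup>2" using s2 assms by simp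
      then show "- ((s-1)*r) * \<sigma>2^2 / 2 \<le> - (1/8) * \<beta> * r * s * \<sigma>2\<^sup>2" using H1 by simp
    qed
    finally show ?thesis .
  qed
  have e3: "?P (B3 N0 N1 r \<sigma>2 i) \<le> T"
  proof -
    have "?P (B3 N0 N1 r \<sigma>2 i) \<le> exp (- ((s-1)*r * \<sigma>2^2) / (2 * (1 + \<sigma>2/3)))"
      using P3[OF i, of r \<sigma>2 q \<beta>] assms by (simp add: cB)
    also have "\<dots> \<le> T" unfolding T_def
    proof (subst exp_le_cancel_iff)
      have nn: "0 \<le> (s-1)*r*\<sigma>2\<^sup>2" using s2 assms by simp
      have "(s-1)*r*\<sigma>2\<^sup>2/4 \<le> (s-1)*r*\<sigma>2\<^sup>2 / (2 * (1 + \<sigma>2/3))"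
        using nn assms by (intro divide_left_mono) auto
      moreover have "- ((s-1)*r * \<sigma>2^2) / (2 * (1 + \<sigma>2/3)) = - ((s-1)*r*\<sigma>2\<^sup>2 / (2 * (1 + \<sigma>2/3)))"
        by simp
      moreover have "- (1/8) * \<beta> * r * s * \<sigma>2\<^sup>2 = - (\<beta>*r * s*\<sigma>2\<^sup>2/8)" by simp
      ultimately show "- ((s-1)*r * \<sigma>2^2) / (2 * (1 + \<sigma>2/3)) \<le> - (1/8) * \<beta> * r * s * \<sigma>2\<^sup>2"
        using H1 by linarith
    qed
    finally show ?thesis .
  qed
  have e4: "?P (B4 N0 N1 r \<beta> \<sigma>2 i) \<le> T"
  proof -
    have "?P (B4 N0 N1 r \<beta> \<sigma>2 i) \<le> exp (- ((s-1)*(r*\<beta>)) * \<sigma>2^2 / 2)"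
      using P4[OF i, of r \<beta> \<sigma>2 q] assms by (simp add: cB)
    also have "\<dots> \<le> T" unfolding T_def
      using H2 by (subst exp_le_cancel_iff) simp
    finally show ?thesis .
  qed
  have "?P (Bad N0 N1 r q \<beta> \<sigma>1 \<sigma>2 i) \<le> ?P (B1 N0 N1 q \<sigma>1 i) + ?P (B2 N0 N1 r \<sigma>2 i) + ?P (B3 N0 N1 r \<sigma>2 i) + ?P (B4 N0 N1 r \<beta> \<sigma>2 i)"
    unfolding Bad_def
  proof -
    have u: "\<And>X Y. ?P (X \<union> Y) \<le> ?P X + ?P Y" by (rule measure_Un_le) auto
    show "?P (B1 N0 N1 q \<sigma>1 i \<union> B2 N0 N1 r \<sigma>2 i \<union> B3 N0 N1 r \<sigma>2 i \<union> B4 N0 N1 r \<beta> \<sigma>2 i)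
      \<le> ?P (B1 N0 N1 q \<sigma>1 i) + ?P (B2 N0 N1 r \<sigma>2 i) + ?P (B3 N0 N1 r \<sigma>2 i) + ?P (B4 N0 N1 r \<beta> \<sigma>2 i)"
      using u[of "B1 N0 N1 q \<sigma>1 i \<union> B2 N0 N1 r \<sigma>2 i \<union> B3 N0 N1 r \<sigma>2 i" "B4 N0 N1 r \<beta> \<sigma>2 i"]
        u[of "B1 N0 N1 q \<sigma>1 i \<union> B2 N0 N1 r \<sigma>2 i" "B3 N0 N1 r \<sigma>2 i"]
        u[of "B1 N0 N1 q \<sigma>1 i" "B2 N0 N1 r \<sigma>2 i"] by linarith
  qed
  also have "\<dots> \<le> Fj N0 N1 r q \<beta> \<sigma>1 \<sigma>2 ?j"
    unfolding Fj_def using e1 e2 e3 e4 by (simp add: T_def s_def)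
  finally show ?thesis .
qed



lemma good:
  assumes i: "i < N0+N1" and N: "N0 \<ge> 2" "N1 \<ge> 2"
    and "0 < r" "r < 1" "0 < q" "q < 1" "0 < \<beta>" "\<beta> < 1"
    and "\<sigma>1 \<ge> 0" "0 \<le> \<sigma>2" "\<sigma>2 < 1"
    and nb: "(E,L) \<notin> Bad N0 N1 r q \<beta> \<sigma>1 \<sigma>2 i"
  shows "sbm_gamma N0 N1 E i \<le>
          (1 + \<sigma>1) * q * real (sbm_size N0 N1 (1 - sbm_blk N0 i)) /
          ((1 + \<sigma>1) * q * real (sbm_size N0 N1 (1 - sbm_blk N0 i)) + (1 - \<sigma>2) * r * (real (sbm_size N0 N1 (sbm_blk N0 i)) - 1))
        \<and> sbm_beta N0 N1 E L i \<ge> (1 - \<sigma>2) / (1 + \<sigma>2) * \<beta>"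
proof -
  let ?j = "sbm_blk N0 i"
  define s where "s = real (sbm_size N0 N1 ?j)"
  define No where "No = real (sbm_size N0 N1 (1 - ?j))"
  have s2: "2 \<le> s" using size_ge2[OF N] by (simp add: s_def)
  have cB: "real (card (Bin N0 N1 i)) = s - 1" using real_card_Bin[OF i N] by (simp add: s_def)
  have cO: "real (card (Bout N0 N1 i)) = No" by (simp add: card_Bout No_def)
  have h1: "Dout N0 N1 i (E,L) \<le> (1 + \<sigma>1) * q * No"
    using nb by (auto simp: Bad_def B1_def cO algebra_simps)
  have h2: "(1-\<sigma>2)*r*(s-1) \<le> Din N0 N1 i (E,L)"
    using nb by (auto simp: Bad_def B2_def cB algebra_simps)
  have h3: "Din N0 N1 i (E,L) \<le> (1+\<sigma>2)*((s-1)*r)"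
    using nb by (auto simp: Bad_def B3_def cB algebra_simps)
  have h4: "(1-\<sigma>2)*((s-1)*(r*\<beta>)) \<le> Mc N0 N1 i (E,L)"
    using nb by (auto simp: Bad_def B4_def cB algebra_simps)
  have g: "sbm_gamma N0 N1 E i \<le> (1 + \<sigma>1) * q * No / ((1 + \<sigma>1) * q * No + (1-\<sigma>2)*r*(s-1))"
    unfolding gamma_eq[OF i, of E L]
    by (rule gamma_bound[OF Dout_nonneg h1 h2]) (use assms s2 in simp)
  have m0: "0 < (1-\<sigma>2)*((s-1)*(r*\<beta>))" using assms s2 by simp
  have "(1-\<sigma>2)*((s-1)*(r*\<beta>)) / ((1+\<sigma>2)*((s-1)*r)) \<le> sbm_beta N0 N1 E L i"
    unfolding beta_eq[OF i, of E L] by (rule beta_bound[OF m0 h4 Mc_le_Din h3])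
  moreover have "(1-\<sigma>2)*((s-1)*(r*\<beta>)) / ((1+\<sigma>2)*((s-1)*r)) = (1 - \<sigma>2) / (1 + \<sigma>2) * \<beta>"
  proof -
    have c: "(s-1)*r \<noteq> 0" using assms s2 by simp
    have "(1-\<sigma>2)*((s-1)*(r*\<beta>)) / ((1+\<sigma>2)*((s-1)*r)) = (((1-\<sigma>2)*\<beta>) * ((s-1)*r)) / ((1+\<sigma>2)*((s-1)*r))"
      by (simp add: algebra_simps)
    also have "\<dots> = ((1-\<sigma>2)*\<beta>) / (1+\<sigma>2)" by (rule nonzero_mult_divide_mult_cancel_right[OF c])
    finally show ?thesis by simp
  qed
  ultimately show ?thesis using g by (simp add: s_def No_def)
qed

theorem mainTheorem10:
  fixes N0 N1 :: nat and r q \<beta> \<sigma>1 \<sigma>2 :: real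
  assumes "N0 \<ge> 2" "N1 \<ge> 2"
    and "0 < r" "r < 1" "0 < q" "q < 1" "0 < \<beta>" "\<beta> < 1"
    and "\<sigma>1 \<ge> 0" "0 \<le> \<sigma>2" "\<sigma>2 < 1"
  shows "measure_pmf.prob (sbm_pmf N0 N1 r q \<beta>)
     {(E, L). \<forall>j\<in>{0::nat, 1}. \<forall>i\<in>sbm_block N0 N1 j.
        sbm_gamma N0 N1 E i \<le>
          (1 + \<sigma>1) * q * real (sbm_size N0 N1 (1 - j)) /
          ((1 + \<sigma>1) * q * real (sbm_size N0 N1 (1 - j)) + (1 - \<sigma>2) * r * (real (sbm_size N0 N1 j) - 1))
        \<and> sbm_beta N0 N1 E L i \<ge> (1 - \<sigma>2) / (1 + \<sigma>2) * \<beta>}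
   \<ge> 1 - (\<Sum>j\<in>{0::nat, 1}. real (sbm_size N0 N1 j) *
        (exp (- (q * real (sbm_size N0 N1 (1 - j)) * \<sigma>1\<^sup>2) / (2 * (1 + \<sigma>1 / 3)))
         + 3 * exp (- (1/8) * \<beta> * r * real (sbm_size N0 N1 j) * \<sigma>2\<^sup>2)))"
  (is "measure_pmf.prob ?M ?G \<ge> 1 - ?S")
proof -
  let ?P = "measure_pmf.prob ?M"
  let ?Bad = "\<Union>i\<in>{..<N0+N1}. Bad N0 N1 r q \<beta> \<sigma>1 \<sigma>2 i"
  let ?F = "Fj N0 N1 r q \<beta> \<sigma>1 \<sigma>2"
  have sub: "UNIV - ?G \<subseteq> ?Bad"
  proof
    fix w assume w: "w \<in> UNIV - ?G"
    obtain E L where wEL: "w = (E,L)" by (cases w)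
    show "w \<in> ?Bad"
    proof (rule ccontr)
      assume nb: "w \<notin> ?Bad"
      have "w \<in> ?G" unfolding wEL
      proof (clarify)
        fix j i assume j: "j \<in> {0::nat,1}" and ib: "i \<in> sbm_block N0 N1 j"
        then have i: "i < N0+N1" and ji: "sbm_blk N0 i = j" by (auto simp: in_block)
        have "(E,L) \<notin> Bad N0 N1 r q \<beta> \<sigma>1 \<sigma>2 i" using nb i wEL by auto
        from good[OF i assms this] show "sbm_gamma N0 N1 E i \<le>
          (1 + \<sigma>1) * q * real (sbm_size N0 N1 (1 - j)) /
          ((1 + \<sigma>1) * q * real (sbm_size N0 N1 (1 - j)) + (1 - \<sigma>2) * r * (real (sbm_size N0 N1 j) - 1))
        \<and> sbm_beta N0 N1 E L i \<ge> (1 - \<sigma>2) / (1 + \<sigma>2) * \<beta>" by (simp add: ji)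
      qed
      then show False using w by simp
    qed
  qed
  have "?P (UNIV - ?G) \<le> ?P ?Bad"
    using sub by (intro measure_pmf.finite_measure_mono) auto
  also have "\<dots> \<le> (\<Sum>i\<in>{..<N0+N1}. ?P (Bad N0 N1 r q \<beta> \<sigma>1 \<sigma>2 i))"
    by (intro measure_pmf.finite_measure_subadditive_finite) auto
  also have "\<dots> \<le> (\<Sum>i\<in>{..<N0+N1}. ?F (sbm_blk N0 i))"
    by (intro sum_mono vertex_bound assms) auto
  also have "\<dots> = ?S"
  proof -
    have "(\<Sum>i\<in>{..<N0+N1}. ?F (sbm_blk N0 i)) = (\<Sum>i\<in>sbm_block N0 N1 0. ?F (sbm_blk N0 i)) + (\<Sum>i\<in>sbm_block N0 N1 1. ?F (sbm_blk N0 i))"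
    proof -
      have U: "{..<N0+N1} = sbm_block N0 N1 0 \<union> sbm_block N0 N1 1" by (auto simp: sbm_block_def sbm_blk_def)
      have D: "sbm_block N0 N1 0 \<inter> sbm_block N0 N1 1 = {}" by (auto simp: sbm_block_def)
      show ?thesis unfolding U by (rule sum.union_disjoint[OF finite_block finite_block D])
    qed
    also have "\<dots> = (\<Sum>i\<in>sbm_block N0 N1 0. ?F 0) + (\<Sum>i\<in>sbm_block N0 N1 1. ?F 1)"
      by (simp add: in_block)
    also have "\<dots> = real N0 * ?F 0 + real N1 * ?F 1"
      using card_block[of 0 N0 N1] card_block[of 1 N0 N1] by (simp add: sbm_size_def)
    also have "\<dots> = ?S" by (simp add: Fj_def sbm_size_def)
    finally show ?thesis .
  qed
  finally have "?P (UNIV - ?G) \<le> ?S" .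
  moreover have "?P (UNIV - ?G) = 1 - ?P ?G"
    using measure_pmf.prob_compl[of ?G "sbm_pmf N0 N1 r q \<beta>"] by simp
  ultimately show ?thesis by linarith
qed


end
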